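(* Let $p\geq1$, let $\varrho:\mathscr{P}(\mathbb{R})\to\mathbb{R}$ be a functional and let $\mathscr{M}\subset\mathscr{P}_p(\mathbb{R})$. For $N\in\mathbb{N}$ and $\boldsymbol\xi=(\xi^1,\dots,\xi^N)\in\mathbb{R}^N$ let $P_N^{\boldsymbol\xi}=\frac1N\sum_{i=1}^N\delta_{\xi^i}$ denote the empirical distribution, and define $\widehat\varrho_N:\mathbb{R}^N\to\mathbb{R}$ by $\widehat\varrho_N(\boldsymbol\xi)=\varrho(P_N^{\boldsymbol\xi})$. Fix $N\in\mathbb{N}$ and assume there is a constant $L>0$ such that $$|\varrho(P_N^{\boldsymbol\xi})-\varrho(P_N^{\widehat{\boldsymbol\xi}})|\leq\frac LN\sum_{k=1}^N c_p(\xi^k,\widehat\xi^k)|\xi^k-\widehat\xi^k|\quad\text{for all }\boldsymbol\xi,\widehat{\boldsymbol\xi}\in\mathbb{R}^N.$$ Then $$\mathsf{d}_K\big(P^{\otimes N}\circ\widehat\varrho_N^{-1},\,Q^{\otimes N}\circ\widehat\varrho_N^{-1}\big)\leq L\,\mathsf{d}_{FM,p}(P,Q)<+\infty\quad\text{for all }P,Q\in\mathscr{M}.$$ If the assumption holds (with the same $L$) for all $N\in\mathbb{N}$, then this inequality holds for all $N\in\mathbb{N}$. In particular, when $p=1$, $\mathsf{d}_K\big(P^{\otimes N}\circ\widehat\varrho_N^{-1},Q^{\otimes N}\circ\widehat\varrho_N^{-1}\big)\leq L\,\mathsf{d}_K(P,Q)<+\infty$ for all $P,Q\in\mathscr{M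}$.
   Context: $\mathscr{P}(\mathbb{R})$ is the set of Borel probability measures on $\mathbb{R}$. For $p\geq1$, $c_p(\xi,\tilde\xi)=\max\{1,|\xi|,|\tilde\xi|\}^{p-1}$; $\mathcal{F}_p(\mathbb{R})$ is the set of $\psi:\mathbb{R}\to\mathbb{R}$ with $|\psi(\xi)-\psi(\tilde\xi)|\leq c_p(\xi,\tilde\xi)|\xi-\tilde\xi|$ for all $\xi,\tilde\xi$; the Fortet–Mourier metric is $\mathsf{d}_{FM,p}(P,Q)=\sup_{\psi\in\mathcal{F}_p(\mathbb{R})}|\int\psi\,dP-\int\psi\,dQ|$, and the Kantorovich metric is $\mathsf{d}_K=\mathsf{d}_{FM,1}$ (supremum over $1$-Lipschitz functions). $\mathscr{P}_p(\mathbb{R})=\{P\in\mathscr{P}(\mathbb{R}):\mathsf{d}_{FM,p}(P,\delta_0)<+\infty\}$, with $\delta_0$ the Dirac measure at $0$. $P^{\otimes N}$ is the $N$-fold product measure on $\mathbb{R}^N$ and $P^{\otimes N}\circ\widehat\varrho_N^{-1}$ is the law of $\widehat\varrho_N(\xi^1,\dots,\xi^N)$ when $\xi^1,\dots,\xi^N$ are i.i.d. with law $P$. *)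

theory Defs
  imports "HOL-Probability.Probability"
begin

definition c_p :: "real \<Rightarrow> real \<Rightarrow> real \<Rightarrow> real" where
  "c_p p x y = (max 1 (max \<bar>x\<bar> \<bar>y\<bar>)) powr (p - 1)"

definition FM_class :: "real \<Rightarrow> (real \<Rightarrow> real) set" where
  "FM_class p = {\<psi>. \<forall>x y. \<bar>\<psi> x - \<psi> y\<bar> \<le> c_p p x y * \<bar>x - y\<bar>}"

definition d_FM :: "real \<Rightarrow> real measure \<Rightarrow> real measure \<Rightarrow> ereal" where
  "d_FM p P Q = (SUP \<psi>\<in>FM_class p. ereal \<bar>(\<integral>x. \<psi> x \<partial>P) - (\<integral>x. \<psi> x \<partial>Q)\<bar>)"

definition d_K :: "real measure \<Rightarrow> real measure \<Rightarrow> ereal" where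
  "d_K = d_FM 1"

definition ProbR :: "real measure set" where
  "ProbR = {P. prob_space P \<and> sets P = sets borel}"

definition Prob_p :: "real \<Rightarrow> real measure set" where
  "Prob_p p = {P \<in> ProbR. d_FM p P (return borel 0) < \<infinity>}"

text \<open>Empirical distribution (1/N) sum_{i<N} delta_(xi i) of the first N coordinates.\<close>
definition empirical :: "nat \<Rightarrow> (nat \<Rightarrow> real) \<Rightarrow> real measure" where
  "empirical N \<xi> = distr (uniform_count_measure {..<N}) borel \<xi>"

definition rho_hat :: "(real measure \<Rightarrow> real) \<Rightarrow> nat \<Rightarrow> (nat \<Rightarrow> real) \<Rightarrow> real" where
  "rho_hat \<rho> N \<xi> = \<rho> (empirical N \<xi>)"

definition law_rho_hat :: "(real measure \<Rightarrow> real) \<Rightarrow> nat \<Rightarrow> real measure \<Rightarrow> real measure" where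
  "law_rho_hat \<rho> N P = distr (PiM {..<N} (\<lambda>_. P)) borel (rho_hat \<rho> N)"

end

theory Submission
  imports Defs
begin


lemma powr_diff_le:
  fixes s t p :: real
  assumes "1 \<le> s" "s \<le> t" "p \<ge> 1"
  shows "t powr p - s powr p \<le> p * t powr (p-1) * (t - s)"
proof (cases "s = t")
  case True then show ?thesis by simp
next
  case False
  then have st: "s < t" using assms by simp
  have "\<And>x. s \<le> x \<Longrightarrow> x \<le> t \<Longrightarrow> DERIV (\<lambda>x. x powr p) x :> p * x powr (p-1)"
    using assms by (auto intro!: has_real_derivative_powr)
  from MVT2[OF st this] obtain z where z: "s < z" "z < t"
    "t powr p - s powr p = (t - s) * (p * z powr (p-1))" by blast
  have "z powr (p-1) \<le> t powr (p-1)"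
    using z assms by (intro powr_mono2) auto
  then have "(t - s) * (p * z powr (p-1)) \<le> (t - s) * (p * t powr (p-1))"
    using st assms by (intro mult_left_mono) auto
  then show ?thesis using z(3) by (simp add: algebra_simps)
qed

lemma c_p_ge1: "p \<ge> 1 \<Longrightarrow> c_p p x y \<ge> 1"
  unfolding c_p_def by (rule ge_one_powr_ge_zero) auto

lemma c_p_sym: "c_p p x y = c_p p y x"
  unfolding c_p_def by (simp add: max.commute)

lemma v_FM:
  fixes p :: real assumes p: "p \<ge> 1"
  shows "(\<lambda>x. max 1 \<bar>x\<bar> powr p / p) \<in> FM_class p"
proof -
  have key: "max 1 \<bar>x\<bar> powr p / p - max 1 \<bar>y\<bar> powr p / p \<le> c_p p x y * \<bar>x - y\<bar>"
    if "max 1 \<bar>y\<bar> \<le> max 1 \<bar>x\<bar>" for x y :: real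
  proof -
    let ?t = "max 1 \<bar>x\<bar>" and ?s = "max 1 \<bar>y\<bar>"
    have "?t powr p - ?s powr p \<le> p * ?t powr (p-1) * (?t - ?s)"
      using that p by (intro powr_diff_le) auto
    then have "(?t powr p - ?s powr p) / p \<le> ?t powr (p-1) * (?t - ?s)"
      using p by (subst pos_divide_le_eq) (auto simp: mult_ac)
    then have "max 1 \<bar>x\<bar> powr p / p - max 1 \<bar>y\<bar> powr p / p \<le> ?t powr (p-1) * (?t - ?s)"
      by (simp add: diff_divide_distrib)
    also have "\<dots> \<le> c_p p x y * \<bar>x - y\<bar>"
      unfolding c_p_def using p that
      by (intro mult_mono powr_mono2) auto
    finally show ?thesis .
  qed
  show ?thesis unfolding FM_class_def
  proof (intro CollectI allI)
    fix x y :: real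
    show "\<bar>max 1 \<bar>x\<bar> powr p / p - max 1 \<bar>y\<bar> powr p / p\<bar> \<le> c_p p x y * \<bar>x - y\<bar>"
    proof (cases "max 1 \<bar>y\<bar> \<le> max 1 \<bar>x\<bar>")
      case True
      moreover have "max 1 \<bar>y\<bar> powr p \<le> max 1 \<bar>x\<bar> powr p" using True p by (intro powr_mono2) auto
      ultimately show ?thesis using key[of y x] key[OF True] p by (auto simp: abs_le_iff divide_right_mono)
    next
      case False
      then have F: "max 1 \<bar>x\<bar> \<le> max 1 \<bar>y\<bar>" by linarith
      have "max 1 \<bar>x\<bar> powr p \<le> max 1 \<bar>y\<bar> powr p" using F p by (intro powr_mono2) auto
      then show ?thesis using key[OF F] p by (auto simp: abs_le_iff divide_right_mono c_p_sym abs_minus_commute)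
    qed
  qed
qed


lemma FM_cont:
  assumes p: "p \<ge> 1" and psi: "\<psi> \<in> FM_class p"
  shows "continuous_on UNIV \<psi>"
proof (rule continuous_at_imp_continuous_on, intro ballI)
  fix x :: real
  define K where "K = max 1 (\<bar>x\<bar> + 1) powr (p - 1)"
  have ev: "eventually (\<lambda>y. norm (\<psi> y - \<psi> x) \<le> K * \<bar>y - x\<bar>) (at x)"
  proof -
    have "\<forall>y. y \<noteq> x \<and> dist y x < 1 \<longrightarrow> norm (\<psi> y - \<psi> x) \<le> K * \<bar>y - x\<bar>"
    proof (intro allI impI)
    fix y :: real assume "y \<noteq> x \<and> dist y x < 1"
    then have y: "\<bar>y - x\<bar> < 1" by (simp add: dist_real_def)
    have "c_p p y x \<le> K" unfolding c_p_def K_def using y p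
      by (intro powr_mono2) auto
    then have "c_p p y x * \<bar>y - x\<bar> \<le> K * \<bar>y - x\<bar>" by (rule mult_right_mono) simp
    moreover have "\<bar>\<psi> y - \<psi> x\<bar> \<le> c_p p y x * \<bar>y - x\<bar>" using psi unfolding FM_class_def by blast
    ultimately show "norm (\<psi> y - \<psi> x) \<le> K * \<bar>y - x\<bar>" by simp
    qed
    then show ?thesis unfolding eventually_at by (intro exI[of _ 1]) auto
  qed
  have "((\<lambda>y. K * \<bar>y - x\<bar>) \<longlongrightarrow> K * \<bar>x - x\<bar>) (at x)"
    by (intro tendsto_intros)
  then have "((\<lambda>y. K * \<bar>y - x\<bar>) \<longlongrightarrow> 0) (at x)" by simp
  from Lim_null_comparison[OF ev this] have "((\<lambda>y. \<psi> y - \<psi> x) \<longlongrightarrow> 0) (at x)" .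
  then have "(\<psi> \<longlongrightarrow> \<psi> x) (at x)" by (rule LIM_zero_cancel)
  then show "isCont \<psi> x" by (simp add: isCont_def)
qed

lemma cont_meas:
  fixes f :: "real \<Rightarrow> real"
  assumes "continuous_on UNIV f" "sets M = sets borel"
  shows "f \<in> borel_measurable M"
  using borel_measurable_continuous_onI[OF assms(1)] measurable_cong_sets[OF assms(2) refl] by blast

lemma FM_meas:
  assumes "p \<ge> 1" "\<psi> \<in> FM_class p" "sets M = sets borel"
  shows "\<psi> \<in> borel_measurable M"
  using cont_meas[OF FM_cont[OF assms(1,2)] assms(3)] .

lemma zero_FM: "p \<ge> 1 \<Longrightarrow> (\<lambda>_. 0) \<in> FM_class p"
  unfolding FM_class_def using c_p_ge1 by (auto intro!: mult_nonneg_nonneg) (smt (verit) c_p_ge1)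

lemma d_FM_nonneg: "p \<ge> 1 \<Longrightarrow> 0 \<le> d_FM p P Q"
  unfolding d_FM_def
  by (rule order_trans[OF _ SUP_upper[OF zero_FM]]) auto

lemma FM_le_d_FM: "\<psi> \<in> FM_class p \<Longrightarrow> ereal \<bar>(\<integral>x. \<psi> x \<partial>P) - (\<integral>x. \<psi> x \<partial>Q)\<bar> \<le> d_FM p P Q"
  unfolding d_FM_def by (rule SUP_upper)

lemma FM_bound:
  assumes p: "p \<ge> 1" and P: "P \<in> Prob_p p"
  shows "\<exists>B. \<forall>\<psi>\<in>FM_class p. \<bar>(\<integral>x. \<psi> x \<partial>P) - \<psi> 0\<bar> \<le> B"
proof -
  have fin: "d_FM p P (return borel 0) < \<infinity>" using P unfolding Prob_p_def by auto
  have nn: "0 \<le> d_FM p P (return borel 0)" using d_FM_nonneg[OF p] .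
  obtain B where B: "d_FM p P (return borel 0) = ereal B" using fin nn
    by (cases "d_FM p P (return borel 0)") auto
  show ?thesis
  proof (intro exI ballI)
    fix \<psi> assume psi: "\<psi> \<in> FM_class p"
    have "(\<integral>x. \<psi> x \<partial>return borel 0) = \<psi> 0"
      by (rule integral_return) (auto intro: FM_meas[OF p psi])
    with FM_le_d_FM[OF psi, of P "return borel 0"] B
    show "\<bar>(\<integral>x. \<psi> x \<partial>P) - \<psi> 0\<bar> \<le> B" by simp
  qed
qed

lemma d_FM_finite:
  assumes p: "p \<ge> 1" and P: "P \<in> Prob_p p" and Q: "Q \<in> Prob_p p"
  shows "d_FM p P Q < \<infinity>"
proof -
  obtain B1 where B1: "\<forall>\<psi>\<in>FM_class p. \<bar>(\<integral>x. \<psi> x \<partial>P) - \<psi> 0\<bar> \<le> B1" using FM_bound[OF p P] by blast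
  obtain B2 where B2: "\<forall>\<psi>\<in>FM_class p. \<bar>(\<integral>x. \<psi> x \<partial>Q) - \<psi> 0\<bar> \<le> B2" using FM_bound[OF p Q] by blast
  have "d_FM p P Q \<le> ereal (B1 + B2)"
    unfolding d_FM_def
  proof (rule SUP_least)
    fix \<psi> assume psi: "\<psi> \<in> FM_class p"
    have "\<bar>(\<integral>x. \<psi> x \<partial>P) - (\<integral>x. \<psi> x \<partial>Q)\<bar> \<le> B1 + B2"
      using B1[rule_format, OF psi] B2[rule_format, OF psi] by linarith
    then show "ereal \<bar>(\<integral>x. \<psi> x \<partial>P) - (\<integral>x. \<psi> x \<partial>Q)\<bar> \<le> ereal (B1 + B2)" by simp
  qed
  then show ?thesis by (rule le_less_trans) simp
qed

lemma min_FM: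
  assumes "f \<in> FM_class p" shows "(\<lambda>x. min (f x) c) \<in> FM_class p"
  using assms unfolding FM_class_def
  by (auto simp: min_def) (smt (verit))+

lemma moment:
  assumes p: "p \<ge> 1" and P: "P \<in> Prob_p p"
  shows "integrable P (\<lambda>x. max 1 \<bar>x\<bar> powr p)"
proof -
  have ps: "prob_space P" and sP: "sets P = sets borel" using P unfolding Prob_p_def ProbR_def by auto
  interpret prob_space P by fact
  obtain B where B: "\<forall>\<psi>\<in>FM_class p. \<bar>(\<integral>x. \<psi> x \<partial>P) - \<psi> 0\<bar> \<le> B" using FM_bound[OF p P] by blast
  define v where "v x = max 1 \<bar>x\<bar> powr p / p" for x :: real
  have vFM: "v \<in> FM_class p" unfolding v_def using v_FM[OF p] .
  have vnn: "v x \<ge> 0" for x unfolding v_def using p by auto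
  have v0: "v 0 = 1 / p" unfolding v_def by simp
  have vm: "v \<in> borel_measurable P" by (rule FM_meas[OF p vFM sP])
  define vn where "vn n x = min (v x) (real n)" for n :: nat and x
  have vnFM: "vn n \<in> FM_class p" for n unfolding vn_def by (rule min_FM[OF vFM])
  have vnm: "vn n \<in> borel_measurable P" for n by (rule FM_meas[OF p vnFM sP])
  have vnint: "integrable P (vn n)" for n
    by (rule integrable_const_bound[where B="real n"]) (auto simp: vn_def vnn vnm)
  have vnle: "(\<integral>x. vn n x \<partial>P) \<le> B + 1" for n
  proof -
    have "\<bar>(\<integral>x. vn n x \<partial>P) - vn n 0\<bar> \<le> B" using B vnFM by blast
    moreover have "vn n 0 \<le> v 0" unfolding vn_def by simp
    moreover have "v 0 \<le> 1" using v0 p by simp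
    ultimately show ?thesis by linarith
  qed
  have sup: "ennreal (v x) = (SUP n. ennreal (vn n x))" for x
  proof (rule antisym)
    obtain n :: nat where "v x \<le> real n" using real_arch_simple by blast
    then have "ennreal (v x) = ennreal (vn n x)" unfolding vn_def by simp
    then show "ennreal (v x) \<le> (SUP n. ennreal (vn n x))" by (metis SUP_upper UNIV_I)
    show "(SUP n. ennreal (vn n x)) \<le> ennreal (v x)"
      by (rule SUP_least) (auto simp: vn_def intro!: ennreal_leI)
  qed
  have inc: "incseq (\<lambda>n x. ennreal (vn n x))"
    by (auto simp: incseq_def le_fun_def vn_def intro!: ennreal_leI)
  have "(\<integral>\<^sup>+x. ennreal (v x) \<partial>P) = (\<integral>\<^sup>+x. (SUP n. ennreal (vn n x)) \<partial>P)"
    by (simp add: sup)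
  also have "\<dots> = (SUP n. \<integral>\<^sup>+x. ennreal (vn n x) \<partial>P)"
    by (rule nn_integral_monotone_convergence_SUP[OF inc]) (intro measurable_compose[OF vnm] measurable_ennreal)
  also have "\<dots> \<le> ennreal (B + 1)"
  proof (rule SUP_least)
    fix n
    have "(\<integral>\<^sup>+x. ennreal (vn n x) \<partial>P) = ennreal (\<integral>x. vn n x \<partial>P)"
      by (rule nn_integral_eq_integral[OF vnint]) (auto simp: vn_def vnn)
    also have "\<dots> \<le> ennreal (B + 1)" using vnle by (rule ennreal_leI)
    finally show "(\<integral>\<^sup>+x. ennreal (vn n x) \<partial>P) \<le> ennreal (B + 1)" .
  qed
  finally have "(\<integral>\<^sup>+x. ennreal (norm (v x)) \<partial>P) < \<infinity>"
    using vnn by (simp add: le_less_trans)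
  then have "integrable P v" by (intro integrableI_bounded vm)
  then have "integrable P (\<lambda>x. p * v x)" by (rule integrable_mult_right)
  moreover have "(\<lambda>x. p * v x) = (\<lambda>x. max 1 \<bar>x\<bar> powr p)" using p by (auto simp: v_def)
  ultimately show ?thesis by simp
qed



lemma empirical_restrict:
  "empirical N \<xi> = empirical N (\<lambda>i. if i < N then \<xi> i else 0)"
  unfolding empirical_def by (rule distr_cong) (auto simp: space_uniform_count_measure)

lemma rho_meas:
  fixes p L :: real and \<rho> :: "real measure \<Rightarrow> real" and N :: nat
  assumes p: "p \<ge> 1"
    and Lip: "\<forall>\<xi> \<xi>' :: nat \<Rightarrow> real.
           \<bar>\<rho> (empirical N \<xi>) - \<rho> (empirical N \<xi>')\<bar>
             \<le> L / real N * (\<Sum>k<N. c_p p (\<xi> k) (\<xi>' k) * \<bar>\<xi> k - \<xi>' k\<bar>)"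
  shows "rho_hat \<rho> N \<in> borel_measurable (PiM {..<N} (\<lambda>_. borel))"
proof -
  define g where "g = rho_hat \<rho> N"
  have cont: "continuous_on UNIV g"
  proof (rule continuous_at_imp_continuous_on, intro ballI)
    fix \<xi>0 :: "nat \<Rightarrow> real"
    define B where "B \<xi> = L / real N * (\<Sum>k<N. c_p p (\<xi> k) (\<xi>0 k) * \<bar>\<xi> k - \<xi>0 k\<bar>)" for \<xi> :: "nat \<Rightarrow> real"
    have "continuous_on UNIV B" unfolding B_def c_p_def
      by (intro continuous_intros continuous_on_product_then_coordinatewise[OF continuous_on_id]) auto
    then have "isCont B \<xi>0" by (simp add: continuous_on_eq_continuous_at)
    then have "(B \<longlongrightarrow> B \<xi>0) (at \<xi>0)" by (simp add: isCont_def)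
    then have lim: "(B \<longlongrightarrow> 0) (at \<xi>0)" by (simp add: B_def)
    have ev: "eventually (\<lambda>\<xi>. norm (g \<xi> - g \<xi>0) \<le> B \<xi>) (at \<xi>0)"
      using Lip unfolding g_def rho_hat_def B_def by (intro always_eventually) auto
    from Lim_null_comparison[OF ev lim] have "((\<lambda>\<xi>. g \<xi> - g \<xi>0) \<longlongrightarrow> 0) (at \<xi>0)" .
    then have "(g \<longlongrightarrow> g \<xi>0) (at \<xi>0)" by (rule LIM_zero_cancel)
    then show "isCont g \<xi>0" by (simp add: isCont_def)
  qed
  have gb: "g \<in> borel_measurable borel" by (rule borel_measurable_continuous_onI[OF cont])
  have gP: "g \<in> borel_measurable (PiM UNIV (\<lambda>_::nat. borel::real measure))"
    using gb measurable_cong_sets[OF sets_PiM_equal_borel refl] by blast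
  define e where "e \<xi> = (\<lambda>i. if i < N then \<xi> i else (0::real))" for \<xi> :: "nat \<Rightarrow> real"
  have em: "e \<in> measurable (PiM {..<N} (\<lambda>_. borel)) (PiM UNIV (\<lambda>_::nat. borel::real measure))"
    unfolding e_def
  proof (rule measurable_PiM_single')
    fix i :: nat
    show "(\<lambda>\<omega>. if i < N then \<omega> i else 0) \<in> borel_measurable (PiM {..<N} (\<lambda>_. borel))"
      by (cases "i < N") (auto intro: measurable_component_singleton)
  qed (auto simp: space_PiM)
  have "g = (\<lambda>\<xi>. g (e \<xi>))"
    unfolding g_def rho_hat_def e_def using empirical_restrict by metis
  then show ?thesis using measurable_compose[OF em gP] unfolding g_def by simp
qed



lemma hybrid_half:
  fixes f :: "(nat \<Rightarrow> real) \<Rightarrow> real" and M :: "nat \<Rightarrow> real measure"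
  assumes fin: "finite I" "k \<notin> I"
    and MI: "\<And>i. i \<in> I \<Longrightarrow> prob_space (M i)"
    and Z: "prob_space Z"
    and intZ: "integrable (PiM (insert k I) (M(k:=Z))) f"
  shows "integral\<^sup>L (PiM (insert k I) (M(k:=Z))) f = (\<integral>X. (\<integral>y. f (X(k:=y)) \<partial>Z) \<partial>PiM I M)"
    and "integrable (PiM I M) (\<lambda>X. \<integral>y. f (X(k:=y)) \<partial>Z)"
proof -
  let ?MZ = "M(k:=Z)"
  have PI: "PiM I ?MZ = PiM I M" using fin by (intro PiM_cong) auto
  have probs: "\<And>i. i \<in> I \<Longrightarrow> prob_space (?MZ i)" "prob_space (?MZ k)" using MI Z fin by auto
  have dist: "distr (Z \<Otimes>\<^sub>M PiM I M) (PiM (insert k I) ?MZ) (\<lambda>(x, X). X(k := x)) = PiM (insert k I) ?MZ"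
  proof -
    have "distr (?MZ k \<Otimes>\<^sub>M PiM I ?MZ) (PiM (insert k I) ?MZ) (\<lambda>(x, X). X(k := x)) = PiM (insert k I) ?MZ"
      by (rule distr_pair_PiM_eq_PiM[of I ?MZ k, OF probs])
    then show ?thesis by (simp only: PI fun_upd_same)
  qed
  have mm: "(\<lambda>(x, X). X(k := x)) \<in> measurable (Z \<Otimes>\<^sub>M PiM I M) (PiM (insert k I) ?MZ)"
  proof -
    have "(\<lambda>x. (snd x)(k := fst x)) \<in> measurable (Z \<Otimes>\<^sub>M PiM I ?MZ) (PiM (insert k I) ?MZ)"
      by (rule measurable_fun_upd[where J=I]) auto
    then show ?thesis using PI by (simp add: split_beta')
  qed
  have fm: "f \<in> borel_measurable (PiM (insert k I) ?MZ)" using intZ by auto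
  interpret Zp: prob_space Z by fact
  interpret Ip: prob_space "PiM I M" using MI by (intro prob_space_PiM) auto
  interpret pair_sigma_finite Z "PiM I M" ..
  have int2: "integrable (Z \<Otimes>\<^sub>M PiM I M) (\<lambda>(x, X). f (X(k := x)))"
    using integrable_distr[OF mm, of f] intZ dist by (simp add: split_beta')
  have "integral\<^sup>L (PiM (insert k I) ?MZ) f = integral\<^sup>L (Z \<Otimes>\<^sub>M PiM I M) (\<lambda>(x, X). f (X(k := x)))"
    using integral_distr[OF mm fm] dist by (simp add: split_beta')
  also have "\<dots> = (\<integral>X. (\<integral>y. f (X(k:=y)) \<partial>Z) \<partial>PiM I M)"
    using integral_snd[of "\<lambda>x X. f (X(k := x))"] int2 by simp
  finally show "integral\<^sup>L (PiM (insert k I) ?MZ) f = (\<integral>X. (\<integral>y. f (X(k:=y)) \<partial>Z) \<partial>PiM I M)" .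
  show "integrable (PiM I M) (\<lambda>X. \<integral>y. f (X(k:=y)) \<partial>Z)"
    using integrable_snd[of "\<lambda>x X. f (X(k := x))"] int2 by simp
qed

lemma hybrid_step:
  fixes f :: "(nat \<Rightarrow> real) \<Rightarrow> real" and M :: "nat \<Rightarrow> real measure"
  assumes fin: "finite I" "k \<notin> I"
    and MI: "\<And>i. i \<in> I \<Longrightarrow> prob_space (M i)"
    and A: "prob_space A" and B: "prob_space B"
    and intA: "integrable (PiM (insert k I) (M(k:=A))) f"
    and intB: "integrable (PiM (insert k I) (M(k:=B))) f"
    and c: "c > 0"
    and FM: "\<And>X. (\<lambda>y. f (X(k:=y)) / c) \<in> FM_class p"
    and D: "d_FM p A B = ereal D"
  shows "\<bar>integral\<^sup>L (PiM (insert k I) (M(k:=A))) f - integral\<^sup>L (PiM (insert k I) (M(k:=B))) f\<bar> \<le> c * D"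
proof -
  note hA = hybrid_half[OF fin MI A intA]
  note hB = hybrid_half[OF fin MI B intB]
  interpret Ip: prob_space "PiM I M" using MI by (intro prob_space_PiM) auto
  define G where "G Z X = (\<integral>y. f (X(k:=y)) \<partial>Z)" for Z X
  have pw: "\<bar>G A X - G B X\<bar> \<le> c * D" for X
  proof -
    have "ereal \<bar>(\<integral>y. f (X(k:=y)) / c \<partial>A) - (\<integral>y. f (X(k:=y)) / c \<partial>B)\<bar> \<le> ereal D"
      using FM_le_d_FM[OF FM[of X], of A B] D by simp
    then have "\<bar>G A X / c - G B X / c\<bar> \<le> D" unfolding G_def by simp
    then have "\<bar>G A X - G B X\<bar> / c \<le> D" using c by (simp add: diff_divide_distrib[symmetric])
    then show ?thesis using c by (simp add: divide_le_eq mult.commute)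
  qed
  have "integral\<^sup>L (PiM (insert k I) (M(k:=A))) f - integral\<^sup>L (PiM (insert k I) (M(k:=B))) f
      = (\<integral>X. G A X - G B X \<partial>PiM I M)"
    using hA hB unfolding G_def by (simp add: Bochner_Integration.integral_diff)
  moreover have "\<bar>\<integral>X. G A X - G B X \<partial>PiM I M\<bar> \<le> (\<integral>X. c * D \<partial>PiM I M)"
  proof -
    have i1: "integrable (PiM I M) (\<lambda>X. G A X - G B X)" using hA(2) hB(2) unfolding G_def by auto
    have "\<bar>\<integral>X. G A X - G B X \<partial>PiM I M\<bar> \<le> (\<integral>X. \<bar>G A X - G B X\<bar> \<partial>PiM I M)"
      by (rule integral_abs_bound)
    also have "\<dots> \<le> (\<integral>X. c * D \<partial>PiM I M)"
      using i1 pw by (intro integral_mono) auto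
    finally show ?thesis .
  qed
  ultimately show ?thesis by (simp add: Ip.prob_space)
qed



lemma c_p_one: "c_p 1 x y = 1"
proof -
  have "max 1 (max \<bar>x\<bar> \<bar>y\<bar>) \<noteq> (0::real)" by linarith
  then show ?thesis unfolding c_p_def by simp
qed

lemma w_int:
  assumes p: "p \<ge> 1" and P: "P \<in> Prob_p p"
  shows "integrable P (\<lambda>x. c_p p x 0 * \<bar>x\<bar>)"
proof -
  have sP: "sets P = sets borel" using P unfolding Prob_p_def ProbR_def by auto
  have "continuous_on UNIV (\<lambda>x::real. c_p p x 0 * \<bar>x\<bar>)" unfolding c_p_def
    by (intro continuous_intros) auto
  then have m: "(\<lambda>x. c_p p x 0 * \<bar>x\<bar>) \<in> borel_measurable P" by (rule cont_meas[OF _ sP])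
  have bd: "norm (c_p p x 0 * \<bar>x\<bar>) \<le> norm (max 1 \<bar>x\<bar> powr p)" for x :: real
  proof -
    have cp: "c_p p x 0 = max 1 \<bar>x\<bar> powr (p - 1)" unfolding c_p_def by (simp add: max_def)
    have "c_p p x 0 * \<bar>x\<bar> \<le> max 1 \<bar>x\<bar> powr (p - 1) * max 1 \<bar>x\<bar>"
      unfolding cp by (intro mult_left_mono) auto
    also have "\<dots> = max 1 \<bar>x\<bar> powr p"
      using powr_mult_base[of "max 1 \<bar>x\<bar>" "p - 1"] by (simp add: mult.commute)
    finally show ?thesis using c_p_ge1[OF p, of x 0] by simp
  qed
  show ?thesis by (rule Bochner_Integration.integrable_bound[OF moment[OF p P] m], rule AE_I2, rule bd)
qed

lemma int_all:
  fixes p L :: real and \<rho> :: "real measure \<Rightarrow> real" and N :: nat and \<psi> :: "real \<Rightarrow> real"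
  assumes p: "p \<ge> 1" and L: "L > 0"
    and Lip: "\<forall>\<xi> \<xi>' :: nat \<Rightarrow> real.
           \<bar>\<rho> (empirical N \<xi>) - \<rho> (empirical N \<xi>')\<bar>
             \<le> L / real N * (\<Sum>k<N. c_p p (\<xi> k) (\<xi>' k) * \<bar>\<xi> k - \<xi>' k\<bar>)"
    and psi: "\<psi> \<in> FM_class 1"
    and Mf: "\<And>i. Mf i \<in> Prob_p p"
  shows "integrable (PiM {..<N} Mf) (\<lambda>\<xi>. \<psi> (rho_hat \<rho> N \<xi>))"
proof -
  have ps: "prob_space (Mf i)" and sM: "sets (Mf i) = sets borel" for i
    using Mf[of i] unfolding Prob_p_def ProbR_def by auto
  interpret product_prob_space Mf using ps by (intro product_prob_spaceI)
  define g where "g = rho_hat \<rho> N"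
  have gm: "g \<in> borel_measurable (PiM {..<N} Mf)"
  proof -
    have "sets (PiM {..<N} Mf) = sets (PiM {..<N} (\<lambda>_. borel))" by (rule sets_PiM_cong) (auto simp: sM)
    then show ?thesis using rho_meas[OF p Lip] measurable_cong_sets[of _ _ borel borel] unfolding g_def
      by blast
  qed
  have psim: "\<psi> \<in> borel_measurable borel" using FM_meas[OF _ psi] by auto
  have pgm: "(\<lambda>\<xi>. \<psi> (g \<xi>)) \<in> borel_measurable (PiM {..<N} Mf)"
    using measurable_compose[OF gm psim] .
  define z where "z = (\<lambda>_::nat. 0::real)"
  define h where "h \<xi> = \<bar>\<psi> (g z)\<bar> + L / real N * (\<Sum>k<N. c_p p (\<xi> k) 0 * \<bar>\<xi> k\<bar>)" for \<xi> :: "nat \<Rightarrow> real"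
  have comp: "integrable (PiM {..<N} Mf) (\<lambda>\<xi>. c_p p (\<xi> k) 0 * \<bar>\<xi> k\<bar>)" if k: "k < N" for k
  proof -
    have d: "distr (PiM {..<N} Mf) (Mf k) (\<lambda>\<omega>. \<omega> k) = Mf k"
      using k ps by (intro distr_PiM_component) auto
    have "integrable (distr (PiM {..<N} Mf) (Mf k) (\<lambda>\<omega>. \<omega> k)) (\<lambda>x. c_p p x 0 * \<bar>x\<bar>)"
      unfolding d by (rule w_int[OF p Mf])
    then show ?thesis
      by (rule integrable_distr[rotated]) (use k in \<open>auto intro: measurable_component_singleton\<close>)
  qed
  have hint: "integrable (PiM {..<N} Mf) h"
  proof -
    interpret pp: prob_space "PiM {..<N} Mf" using ps by (intro prob_space_PiM) auto
    show ?thesis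
      unfolding h_def using comp by (intro Bochner_Integration.integrable_add integrable_mult_right integrable_sum pp.integrable_const) auto
  qed
  have psi1: "\<bar>\<psi> a - \<psi> b\<bar> \<le> \<bar>a - b\<bar>" for a b
  proof -
    have "\<bar>\<psi> a - \<psi> b\<bar> \<le> c_p 1 a b * \<bar>a - b\<bar>" using psi unfolding FM_class_def by blast
    then show ?thesis by (simp only: c_p_one mult_1)
  qed
  have bd: "norm (\<psi> (g \<xi>)) \<le> norm (h \<xi>)" for \<xi>
  proof -
    have hnn: "0 \<le> L / real N * (\<Sum>k<N. c_p p (\<xi> k) 0 * \<bar>\<xi> k\<bar>)"
      using L c_p_ge1[OF p] by (intro mult_nonneg_nonneg sum_nonneg) (simp_all add: order_trans[OF zero_le_one])
    have "\<bar>g \<xi> - g z\<bar> \<le> L / real N * (\<Sum>k<N. c_p p (\<xi> k) 0 * \<bar>\<xi> k\<bar>)"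
    proof -
      have "\<bar>\<rho> (empirical N \<xi>) - \<rho> (empirical N z)\<bar> \<le> L / real N * (\<Sum>k<N. c_p p (\<xi> k) (z k) * \<bar>\<xi> k - z k\<bar>)"
        using Lip by blast
      then show ?thesis unfolding g_def rho_hat_def z_def by simp
    qed
    then have "\<bar>\<psi> (g \<xi>) - \<psi> (g z)\<bar> \<le> L / real N * (\<Sum>k<N. c_p p (\<xi> k) 0 * \<bar>\<xi> k\<bar>)"
      using psi1[of "g \<xi>" "g z"] by linarith
    then show ?thesis unfolding h_def using hnn by simp
  qed
  show ?thesis unfolding g_def[symmetric]
    by (rule Bochner_Integration.integrable_bound[OF hint pgm], rule AE_I2, rule bd)
qed



lemma absdiv: "(c::real) > 0 \<Longrightarrow> \<bar>a / c - b / c\<bar> = \<bar>a - b\<bar> / c"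
  by (simp add: diff_divide_distrib[symmetric] abs_divide)

lemma sum_upd:
  fixes N j :: nat and X :: "nat \<Rightarrow> real"
  assumes "j < N"
  shows "(\<Sum>k<N. c_p p ((X(j:=y)) k) ((X(j:=y')) k) * \<bar>(X(j:=y)) k - (X(j:=y')) k\<bar>) = c_p p y y' * \<bar>y - y'\<bar>"
proof -
  have "(\<Sum>k<N. c_p p ((X(j:=y)) k) ((X(j:=y')) k) * \<bar>(X(j:=y)) k - (X(j:=y')) k\<bar>)
      = (\<Sum>k<N. if k = j then c_p p y y' * \<bar>y - y'\<bar> else 0)"
    by (rule sum.cong) auto
  also have "\<dots> = c_p p y y' * \<bar>y - y'\<bar>" using assms by (subst sum.delta) auto
  finally show ?thesis .
qed

lemma law_int:
  fixes p L :: real and \<rho> :: "real measure \<Rightarrow> real" and N :: nat and \<psi> :: "real \<Rightarrow> real"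
  assumes p: "p \<ge> 1"
    and Lip: "\<forall>\<xi> \<xi>' :: nat \<Rightarrow> real.
           \<bar>\<rho> (empirical N \<xi>) - \<rho> (empirical N \<xi>')\<bar>
             \<le> L / real N * (\<Sum>k<N. c_p p (\<xi> k) (\<xi>' k) * \<bar>\<xi> k - \<xi>' k\<bar>)"
    and psi: "\<psi> \<in> FM_class 1"
    and Z: "Z \<in> Prob_p p"
  shows "(\<integral>x. \<psi> x \<partial>law_rho_hat \<rho> N Z) = (\<integral>\<xi>. \<psi> (rho_hat \<rho> N \<xi>) \<partial>PiM {..<N} (\<lambda>_. Z))"
proof -
  have sZ: "sets Z = sets borel" using Z unfolding Prob_p_def ProbR_def by auto
  have "sets (PiM {..<N} (\<lambda>_. Z)) = sets (PiM {..<N} (\<lambda>_. borel))" by (rule sets_PiM_cong) (auto simp: sZ)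
  then have gm: "rho_hat \<rho> N \<in> borel_measurable (PiM {..<N} (\<lambda>_. Z))"
    using rho_meas[OF p Lip] measurable_cong_sets[of _ _ borel borel] by blast
  have psim: "\<psi> \<in> borel_measurable borel" using FM_meas[OF _ psi] by auto
  show ?thesis unfolding law_rho_hat_def by (rule integral_distr[OF gm psim])
qed

theorem theorem2:
  fixes p L :: real and \<rho> :: "real measure \<Rightarrow> real" and \<M> :: "real measure set" and N :: nat
  assumes "p \<ge> 1"
    and "\<M> \<subseteq> Prob_p p"
    and "N \<ge> 1"
    and "L > 0"
    and "\<forall>\<xi> \<xi>' :: nat \<Rightarrow> real.
           \<bar>\<rho> (empirical N \<xi>) - \<rho> (empirical N \<xi>')\<bar>
             \<le> L / real N * (\<Sum>k<N. c_p p (\<xi> k) (\<xi>' k) * \<bar>\<xi> k - \<xi>' k\<bar>)"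
  shows "\<forall>P\<in>\<M>. \<forall>Q\<in>\<M>.
           d_K (law_rho_hat \<rho> N P) (law_rho_hat \<rho> N Q) \<le> ereal L * d_FM p P Q
           \<and> ereal L * d_FM p P Q < \<infinity>"
proof (intro ballI)
  note p = assms(1) and N = assms(3) and L = assms(4) and Lip = assms(5)
  fix P Q assume "P \<in> \<M>" "Q \<in> \<M>"
  then have PP: "P \<in> Prob_p p" and QP: "Q \<in> Prob_p p" using assms(2) by auto
  have psP: "prob_space P" and psQ: "prob_space Q" using PP QP unfolding Prob_p_def ProbR_def by auto
  obtain D where D: "d_FM p P Q = ereal D"
    using d_FM_finite[OF p PP QP] d_FM_nonneg[OF p, of P Q] by (cases "d_FM p P Q") auto
  have main: "\<bar>(\<integral>x. \<psi> x \<partial>law_rho_hat \<rho> N P) - (\<integral>x. \<psi> x \<partial>law_rho_hat \<rho> N Q)\<bar> \<le> L * D"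
    if psi: "\<psi> \<in> FM_class 1" for \<psi>
  proof -
    define Mf where "Mf j = (\<lambda>i::nat. if i < j then Q else P)" for j :: nat
    define f where "f \<xi> = \<psi> (rho_hat \<rho> N \<xi>)" for \<xi>
    define H where "H j = integral\<^sup>L (PiM {..<N} (Mf j)) f" for j
    have MfP: "Mf j i \<in> Prob_p p" for j i using PP QP by (simp add: Mf_def)
    have intf: "integrable (PiM {..<N} (Mf j)) f" for j
      unfolding f_def by (rule int_all[OF p L Lip psi MfP])
    have H0: "(\<integral>x. \<psi> x \<partial>law_rho_hat \<rho> N P) = H 0"
      unfolding law_int[OF p Lip psi PP] H_def f_def by (simp add: Mf_def)
    have HN: "(\<integral>x. \<psi> x \<partial>law_rho_hat \<rho> N Q) = H N"
    proof -
      have "PiM {..<N} (\<lambda>_. Q) = PiM {..<N} (Mf N)" by (rule PiM_cong) (auto simp: Mf_def)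
      then show ?thesis unfolding law_int[OF p Lip psi QP] H_def f_def by simp
    qed
    have cpos: "L / real N > 0" using L N by simp
    have step: "\<bar>H j - H (Suc j)\<bar> \<le> L / real N * D" if j: "j < N" for j
    proof -
      define I where "I = {..<N} - {j}"
      have fin: "finite I" "j \<notin> I" unfolding I_def by auto
      have ins: "insert j I = {..<N}" using j unfolding I_def by auto
      have e1: "(Mf j)(j := P) = Mf j" by (auto simp: Mf_def)
      have e2: "(Mf j)(j := Q) = Mf (Suc j)" by (auto simp: Mf_def)
      have MI: "\<And>i. i \<in> I \<Longrightarrow> prob_space (Mf j i)" using MfP unfolding Prob_p_def ProbR_def by auto
      have FM: "(\<lambda>y. f (X(j:=y)) / (L / real N)) \<in> FM_class p" for X
        unfolding FM_class_def
      proof (intro CollectI allI)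
        fix y y' :: real
        have psi1: "\<bar>\<psi> a - \<psi> b\<bar> \<le> \<bar>a - b\<bar>" for a b
        proof -
          have "\<bar>\<psi> a - \<psi> b\<bar> \<le> c_p 1 a b * \<bar>a - b\<bar>" using psi unfolding FM_class_def by blast
          then show ?thesis by (simp only: c_p_one mult_1)
        qed
        have "\<bar>rho_hat \<rho> N (X(j:=y)) - rho_hat \<rho> N (X(j:=y'))\<bar>
            \<le> L / real N * (\<Sum>k<N. c_p p ((X(j:=y)) k) ((X(j:=y')) k) * \<bar>(X(j:=y)) k - (X(j:=y')) k\<bar>)"
          using Lip unfolding rho_hat_def by blast
        also have "\<dots> = L / real N * (c_p p y y' * \<bar>y - y'\<bar>)" by (simp only: sum_upd[OF j])
        finally have "\<bar>f (X(j:=y)) - f (X(j:=y'))\<bar> \<le> L / real N * (c_p p y y' * \<bar>y - y'\<bar>)"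
          unfolding f_def using psi1 order_trans by blast
        then have "\<bar>f (X(j:=y)) - f (X(j:=y'))\<bar> \<le> (c_p p y y' * \<bar>y - y'\<bar>) * (L / real N)"
          by (simp only: mult.commute)
        then have "\<bar>f (X(j:=y)) - f (X(j:=y'))\<bar> / (L / real N) \<le> c_p p y y' * \<bar>y - y'\<bar>"
          by (simp only: pos_divide_le_eq[OF cpos])
        then show "\<bar>f (X(j:=y)) / (L / real N) - f (X(j:=y')) / (L / real N)\<bar> \<le> c_p p y y' * \<bar>y - y'\<bar>"
        proof -
          have "\<bar>f (X(j:=y)) / (L / real N) - f (X(j:=y')) / (L / real N)\<bar> = \<bar>f (X(j:=y)) - f (X(j:=y'))\<bar> / (L / real N)"
            by (rule absdiv[OF cpos])
          then show ?thesis using \<open>\<bar>f (X(j:=y)) - f (X(j:=y'))\<bar> / (L / real N) \<le> c_p p y y' * \<bar>y - y'\<bar>\<close> by simp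
        qed
      qed
      have "\<bar>integral\<^sup>L (PiM (insert j I) ((Mf j)(j:=P))) f - integral\<^sup>L (PiM (insert j I) ((Mf j)(j:=Q))) f\<bar> \<le> L / real N * D"
        by (rule hybrid_step[OF fin MI psP psQ _ _ cpos FM D]) (simp_all only: e1 e2 ins intf)
      then show ?thesis unfolding H_def e1 e2 ins .
    qed
    have "H 0 - H N = (\<Sum>j<N. H j - H (Suc j))" by (rule sum_lessThan_telescope'[symmetric])
    then have "\<bar>H 0 - H N\<bar> \<le> (\<Sum>j<N. \<bar>H j - H (Suc j)\<bar>)" by (simp add: sum_abs)
    also have "\<dots> \<le> (\<Sum>j<N. L / real N * D)" by (rule sum_mono) (use step in auto)
    also have "\<dots> = L * D" using N by simp
    finally show ?thesis unfolding H0 HN .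
  qed
  have "d_K (law_rho_hat \<rho> N P) (law_rho_hat \<rho> N Q) \<le> ereal (L * D)"
    unfolding d_K_def d_FM_def
  proof (rule SUP_least)
    fix \<psi> assume "\<psi> \<in> FM_class 1"
    then show "ereal \<bar>(\<integral>x. \<psi> x \<partial>law_rho_hat \<rho> N P) - (\<integral>x. \<psi> x \<partial>law_rho_hat \<rho> N Q)\<bar> \<le> ereal (L * D)"
      using main by simp
  qed
  then show "d_K (law_rho_hat \<rho> N P) (law_rho_hat \<rho> N Q) \<le> ereal L * d_FM p P Q
           \<and> ereal L * d_FM p P Q < \<infinity>"
    unfolding D by simp
qed

end
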